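(* For every integer $m\ge0$ and every $z\in\mathfrak U$, the $2m$-th derivative satisfies $T^{(2m)}(z)\neq0$.
   Context: Let $V_0<V_1<\dots<V_n$ be real, $\beta_1,\dots,\beta_n\in[-1,1]$, $\beta_0:=-1$, $\beta_{n+1}:=1$, with $\beta_i\ne\beta_{i+1}$ for all $0\le i\le n$. Define $$T(z)=\sum_{i=0}^n\tfrac12(\beta_{i+1}-\beta_i)\frac1{z-e^{V_i}}$$ and $$\mathfrak U=(-\infty,e^{V_0})\cup(e^{V_n},\infty)\cup\bigcup_{1\le i\le n,\ \beta_i=\pm1}(e^{V_{i-1}},e^{V_i}).$$ *)

theory Defs
  imports "HOL-Analysis.Analysis"
begin

text \<open>The rational function T, with the convention that beta 0 = -1 and
  beta (n+1) = 1 are imposed as hypotheses in the theorem.\<close>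
definition T_fun :: "nat \<Rightarrow> (nat \<Rightarrow> real) \<Rightarrow> (nat \<Rightarrow> real) \<Rightarrow> real \<Rightarrow> real" where
  "T_fun n V \<beta> z = (\<Sum>i=0..n. (1/2) * (\<beta> (Suc i) - \<beta> i) * (1 / (z - exp (V i))))"

definition U_set :: "nat \<Rightarrow> (nat \<Rightarrow> real) \<Rightarrow> (nat \<Rightarrow> real) \<Rightarrow> real set" where
  "U_set n V \<beta> = {..<exp (V 0)} \<union> {exp (V n)<..} \<union>
     (\<Union>i\<in>{i. 1 \<le> i \<and> i \<le> n \<and> (\<beta> i = 1 \<or> \<beta> i = -1)}. {exp (V (i - 1))<..<exp (V i)})"

end

theory Submission
  imports Defs
begin

lemma alg: "(x::real) \<noteq> 0 \<Longrightarrow> - ((real (Suc k) * x^k * 1) * inverse ((x^Suc k) ^ Suc (Suc 0)))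
      = - real (Suc k) * inverse (x^(Suc (Suc k)))"
proof -
  assume x: "x \<noteq> 0"
  have "(x^Suc k) ^ Suc (Suc 0) = x^k * x^Suc (Suc k)"
    by (simp add: power_add[symmetric] power_mult[symmetric] algebra_simps)
  then show ?thesis using x by (simp add: field_simps)
qed

lemma inv_pow_deriv:
  fixes a w :: real
  assumes "w \<noteq> a"
  shows "((\<lambda>w. inverse ((w-a)^Suc k)) has_real_derivative
           (- real (Suc k) * inverse ((w-a)^(Suc (Suc k))))) (at w)"
proof -
  have d: "((\<lambda>w. (w-a)^Suc k) has_real_derivative (real (Suc k) * (w-a)^k * 1)) (at w)"
    by (rule derivative_eq_intros refl | simp)+
  have "((\<lambda>w. inverse ((w-a)^Suc k)) has_real_derivative
     (- ((real (Suc k) * (w-a)^k * 1) * inverse (((w-a)^Suc k) ^ Suc (Suc 0))))) (at w)"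
    by (rule DERIV_inverse_fun[OF d]) (use assms in auto)
  moreover have "- ((real (Suc k) * (w-a)^k * 1) * inverse (((w-a)^Suc k) ^ Suc (Suc 0)))
      = - real (Suc k) * inverse ((w-a)^(Suc (Suc k)))"
    using alg[of "w-a" k] assms by simp
  ultimately show ?thesis by simp
qed

definition gk :: "nat \<Rightarrow> (nat \<Rightarrow> real) \<Rightarrow> (nat \<Rightarrow> real) \<Rightarrow> nat \<Rightarrow> real \<Rightarrow> real" where
  "gk n V \<beta> k w = (\<Sum>i=0..n. (1/2) * (\<beta> (Suc i) - \<beta> i) *
      (((-1)^k * fact k) * inverse ((w - exp (V i))^Suc k)))"

lemma gk_deriv:
  assumes "w \<notin> (\<lambda>i. exp (V i)) ` {0..n}"
  shows "((gk n V \<beta> k) has_real_derivative gk n V \<beta> (Suc k) w) (at w)"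
proof -
  have "((\<lambda>w. (\<Sum>i=0..n. (1/2) * (\<beta> (Suc i) - \<beta> i) *
      (((-1)^k * fact k) * inverse ((w - exp (V i))^Suc k)))) has_real_derivative
      (\<Sum>i=0..n. (1/2) * (\<beta> (Suc i) - \<beta> i) *
      (((-1)^k * fact k) * (- real (Suc k) * inverse ((w - exp (V i))^(Suc (Suc k))))))) (at w)"
  proof (intro DERIV_sum DERIV_cmult)
    fix i assume "i \<in> {0..n}"
    then have "w \<noteq> exp (V i)" using assms by auto
    then show "((\<lambda>w. inverse ((w - exp (V i))^Suc k)) has_real_derivative
      (- real (Suc k) * inverse ((w - exp (V i))^(Suc (Suc k))))) (at w)"
      by (rule inv_pow_deriv)
  qed
  moreover have "(\<Sum>i=0..n. (1/2) * (\<beta> (Suc i) - \<beta> i) *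
      (((-1)^k * fact k) * (- real (Suc k) * inverse ((w - exp (V i))^(Suc (Suc k))))))
     = gk n V \<beta> (Suc k) w"
    unfolding gk_def by (intro sum.cong refl) (simp add: algebra_simps)
  ultimately show ?thesis unfolding gk_def[abs_def] by simp
qed

lemma iter_deriv:
  assumes "w \<notin> (\<lambda>i. exp (V i)) ` {0..n}"
  shows "(deriv ^^ k) (T_fun n V \<beta>) w = gk n V \<beta> k w"
  using assms
proof (induction k arbitrary: w)
  case 0
  have "(deriv ^^ 0) (T_fun n V \<beta>) w = T_fun n V \<beta> w" by simp
  also have "\<dots> = gk n V \<beta> 0 w" unfolding T_fun_def gk_def
    by (intro sum.cong refl) (simp add: inverse_eq_divide)
  finally show ?case .
next
  case (Suc k)
  let ?S = "- ((\<lambda>i. exp (V i)) ` {0..n})"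
  have op: "open ?S" by (intro open_Compl finite_imp_closed) auto
  have "((deriv ^^ k) (T_fun n V \<beta>) has_real_derivative gk n V \<beta> (Suc k) w) (at w)"
    by (rule has_field_derivative_transform_within_open[OF gk_deriv[OF Suc.prems] op])
       (use Suc in auto)
  then show ?case by (simp add: DERIV_imp_deriv)
qed

lemma abel:
  fixes f \<beta> :: "nat \<Rightarrow> real"
  assumes "p \<le> q"
    and "\<And>j. p \<le> j \<Longrightarrow> j < q \<Longrightarrow> f j \<le> f (Suc j)"
    and "\<And>j. p < j \<Longrightarrow> j \<le> q \<Longrightarrow> \<bar>\<beta> j\<bar> \<le> 1"
  shows "(\<Sum>i=p..q. (\<beta> (Suc i) - \<beta> i) * f i) \<ge> \<beta> (Suc q) * f q - \<beta> p * f p - (f q - f p)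
       \<and> (\<Sum>i=p..q. (\<beta> (Suc i) - \<beta> i) * f i) \<le> \<beta> (Suc q) * f q - \<beta> p * f p + (f q - f p)"
  using assms
proof (induction q rule: dec_induct)
  case base
  then show ?case by (simp add: algebra_simps)
next
  case (step q)
  have m: "f q \<le> f (Suc q)" using step by auto
  have b: "\<bar>\<beta> (Suc q)\<bar> \<le> 1" using step by auto
  have IH: "(\<Sum>i=p..q. (\<beta> (Suc i) - \<beta> i) * f i) \<ge> \<beta> (Suc q) * f q - \<beta> p * f p - (f q - f p)
       \<and> (\<Sum>i=p..q. (\<beta> (Suc i) - \<beta> i) * f i) \<le> \<beta> (Suc q) * f q - \<beta> p * f p + (f q - f p)"
    using step by auto
  have e: "(\<Sum>i=p..Suc q. (\<beta> (Suc i) - \<beta> i) * f i) = (\<Sum>i=p..q. (\<beta> (Suc i) - \<beta> i) * f i)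
     + (\<beta> (Suc (Suc q)) - \<beta> (Suc q)) * f (Suc q)"
    using step by (simp add: sum.cl_ivl_Suc)
  have p1: "0 \<le> (1 - \<beta> (Suc q)) * (f (Suc q) - f q)" using m b by simp
  have p2: "0 \<le> (1 + \<beta> (Suc q)) * (f (Suc q) - f q)" using m b by simp
  show ?case unfolding e using IH p1 p2 by (simp add: algebra_simps)
qed

lemma f_mono_pos:
  fixes a b z :: real
  assumes "a \<le> b" "b < z"
  shows "inverse ((z-a)^N) \<le> inverse ((z-b)^N)"
proof -
  have "(z-b)^N \<le> (z-a)^N" using assms by (intro power_mono) auto
  moreover have "0 < (z-b)^N" using assms by simp
  ultimately show ?thesis by (simp add: le_imp_inverse_le)
qed

lemma f_mono_neg:
  fixes a b z :: real
  assumes "a \<le> b" "z < a" "odd N"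
  shows "inverse ((z-a)^N) \<le> inverse ((z-b)^N)"
proof -
  have "(b-z)^N \<ge> (a-z)^N" using assms by (intro power_mono) auto
  moreover have "0 < (a-z)^N" using assms by simp
  ultimately have "inverse ((b-z)^N) \<le> inverse ((a-z)^N)" by (simp add: le_imp_inverse_le)
  moreover have "(z-a)^N = -((a-z)^N)" "(z-b)^N = -((b-z)^N)"
    using assms by (simp_all add: power_minus_odd[symmetric])
  ultimately show ?thesis by simp
qed

lemma V_strict:
  assumes V_mono: "\<And>i. i < n \<Longrightarrow> V i < V (Suc i)"
  shows "i < j \<Longrightarrow> j \<le> n \<Longrightarrow> (V i :: real) < V j"
proof (induction j)
  case 0 then show ?case by simp
next
  case (Suc j)
  then show ?case using V_mono[of j] by (cases "i = j") auto
qed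

theorem lemma4p2:
  fixes n :: nat and V \<beta> :: "nat \<Rightarrow> real" and m :: nat and z :: real
  assumes V_mono: "\<And>i. i < n \<Longrightarrow> V i < V (Suc i)"
    and \<beta>_range: "\<And>i. 1 \<le> i \<Longrightarrow> i \<le> n \<Longrightarrow> \<beta> i \<in> {-1..1}"
    and \<beta>0: "\<beta> 0 = -1"
    and \<beta>n1: "\<beta> (Suc n) = 1"
    and \<beta>_ne: "\<And>i. i \<le> n \<Longrightarrow> \<beta> i \<noteq> \<beta> (Suc i)"
    and z: "z \<in> U_set n V \<beta>"
  shows "(deriv ^^ (2 * m)) (T_fun n V \<beta>) z \<noteq> 0"
proof -
  define a where "a i = exp (V i)" for i
  define N where "N = Suc (2*m)"
  have oddN: "odd N" unfolding N_def by simp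
  define f where "f i = inverse ((z - a i)^N)" for i
  have amono: "i \<le> j \<Longrightarrow> j \<le> n \<Longrightarrow> a i \<le> a j" for i j
    using V_strict[where n=n and V=V, OF V_mono, of i j] unfolding a_def by (cases "i = j") auto
  have astrict: "i < j \<Longrightarrow> j \<le> n \<Longrightarrow> a i < a j" for i j
    using V_strict[where n=n and V=V, OF V_mono, of i j] unfolding a_def by auto
  have bnd: "\<And>j. 0 < j \<Longrightarrow> j \<le> n \<Longrightarrow> \<bar>\<beta> j\<bar> \<le> 1"
  proof -
    fix j :: nat assume "0 < j" "j \<le> n"
    then have "\<beta> j \<in> {-1..1}" using \<beta>_range by simp
    then show "\<bar>\<beta> j\<bar> \<le> 1" by auto
  qed
  have fpos: "a i < z \<Longrightarrow> 0 < f i" for i unfolding f_def by simp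
  have fneg: "z < a i \<Longrightarrow> f i < 0" for i
  proof -
    assume h: "z < a i"
    have "(z - a i)^N < 0" using h oddN by (simp add: odd_pos power_less_zero_eq)
    then show "f i < 0" unfolding f_def by simp
  qed
  consider (L) "z < a 0" | (R) "a n < z"
      | (M) k where "1 \<le> k" "k \<le> n" "\<beta> k = 1 \<or> \<beta> k = -1" "a (k-1) < z" "z < a k"
    using z unfolding U_set_def a_def by auto
  note zcases = this
  define S where "S = (\<Sum>i=0..n. (\<beta> (Suc i) - \<beta> i) * f i)"
  have Snz: "S \<noteq> 0"
  proof -
    from zcases show ?thesis
    proof cases
      case L
      have side: "z < a i" if "i \<le> n" for i using L amono[of 0 i] that by auto
      have mono: "f j \<le> f (Suc j)" if "0 \<le> j" "j < n" for j
        unfolding f_def using that side[of j] amono[of j "Suc j"] oddN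
        by (intro f_mono_neg) auto
      have ab: "S \<le> \<beta> (Suc n) * f n - \<beta> 0 * f 0 + (f n - f 0)"
        unfolding S_def using abel[of 0 n f \<beta>, OF _ mono bnd] by blast
      have "f n < 0" using fneg side by auto
      then show ?thesis using ab \<beta>0 \<beta>n1 by auto
    next
      case R
      have side: "a i < z" if "i \<le> n" for i using R amono[of i n] that by auto
      have mono: "f j \<le> f (Suc j)" if "0 \<le> j" "j < n" for j
        unfolding f_def using that side[of "Suc j"] amono[of j "Suc j"]
        by (intro f_mono_pos) auto
      have ab: "S \<ge> \<beta> (Suc n) * f n - \<beta> 0 * f 0 - (f n - f 0)"
        unfolding S_def using abel[of 0 n f \<beta>, OF _ mono bnd] by blast
      have "f 0 > 0" using fpos side by auto
      then show ?thesis using ab \<beta>0 \<beta>n1 by auto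
    next
      case M
      obtain k' where k': "k = Suc k'" using M by (cases k) auto
      have split: "S = (\<Sum>i=0..k'. (\<beta> (Suc i) - \<beta> i) * f i) + (\<Sum>i=k..n. (\<beta> (Suc i) - \<beta> i) * f i)"
      proof -
        have "{0..n} = {0..k'} \<union> {k..n}" using M k' by auto
        then show ?thesis unfolding S_def
          by (simp add: sum.union_disjoint k')
      qed
      have lo_side: "a i < z" if "i \<le> k'" for i
        using M k' amono[of i k'] that by auto
      have hi_side: "z < a i" if "k \<le> i" "i \<le> n" for i
        using M amono[of k i] that by auto
      have A: "(\<Sum>i=0..k'. (\<beta> (Suc i) - \<beta> i) * f i) \<ge> \<beta> (Suc k') * f k' - \<beta> 0 * f 0 - (f k' - f 0)
       \<and> (\<Sum>i=0..k'. (\<beta> (Suc i) - \<beta> i) * f i) \<le> \<beta> (Suc k') * f k' - \<beta> 0 * f 0 + (f k' - f 0)"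
      proof (rule abel)
        show "f j \<le> f (Suc j)" if "0 \<le> j" "j < k'" for j
          unfolding f_def using that lo_side[of "Suc j"] amono[of j "Suc j"] M k'
          by (intro f_mono_pos) auto
        show "\<bar>\<beta> j\<bar> \<le> 1" if "0 < j" "j \<le> k'" for j using bnd that M k' by auto
      qed simp
      have B: "(\<Sum>i=k..n. (\<beta> (Suc i) - \<beta> i) * f i) \<ge> \<beta> (Suc n) * f n - \<beta> k * f k - (f n - f k)
       \<and> (\<Sum>i=k..n. (\<beta> (Suc i) - \<beta> i) * f i) \<le> \<beta> (Suc n) * f n - \<beta> k * f k + (f n - f k)"
      proof (rule abel)
        show "f j \<le> f (Suc j)" if "k \<le> j" "j < n" for j
          unfolding f_def using that hi_side[of j] amono[of j "Suc j"] oddN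
          by (intro f_mono_neg) auto
        show "\<bar>\<beta> j\<bar> \<le> 1" if "k < j" "j \<le> n" for j using bnd that by auto
      qed (use M in simp)
      have f0: "f 0 > 0" using fpos lo_side by auto
      have fn: "f n < 0" using fneg hi_side M by auto
      from M(3) show ?thesis
      proof
        assume "\<beta> k = 1"
        then show ?thesis using A B split f0 \<beta>0 \<beta>n1 k' by auto
      next
        assume "\<beta> k = -1"
        then show ?thesis using A B split fn \<beta>0 \<beta>n1 k' by auto
      qed
    qed
  qed
  have znot: "z \<notin> (\<lambda>i. exp (V i)) ` {0..n}"
  proof
    assume "z \<in> (\<lambda>i. exp (V i)) ` {0..n}"
    then obtain i where i0: "i \<in> {0..n}" "z = exp (V i)" by (rule imageE) simp
    then have i: "i \<le> n" "z = a i" by (simp_all add: a_def)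
    from zcases show False
    proof cases
      case L then show ?thesis using amono[of 0 i] i by auto
    next
      case R then show ?thesis using amono[of i n] i by auto
    next
      case M
      show ?thesis
      proof (cases "i \<le> k - 1")
        case True
        have "k - 1 \<le> n" using M by simp
        then have "a i \<le> a (k-1)" using amono True by blast
        then show ?thesis using i M by linarith
      next
        case False
        have "k \<le> i" using False M by linarith
        then have "a k \<le> a i" using amono i by blast
        then show ?thesis using i M by linarith
      qed
    qed
  qed
  have "(deriv ^^ (2 * m)) (T_fun n V \<beta>) z = gk n V \<beta> (2*m) z"
    by (rule iter_deriv[OF znot])
  also have "\<dots> = (fact (2*m) / 2) * S"
    unfolding gk_def S_def f_def a_def N_def
    by (simp add: sum_distrib_left algebra_simps)
  finally have e: "(deriv ^^ (2 * m)) (T_fun n V \<beta>) z = (fact (2*m) / 2) * S" .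
  have "fact (2*m) / 2 \<noteq> (0::real)" by simp
  then show ?thesis unfolding e using Snz by simp
qed

end
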